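(* Let $A\in\mathbb{C}^{m\times n}$. Then the following are equivalent: (1) $A^{\mathfrak{m}}$ exists; (2) $\mathrm{rank}(AA^{\sim})=\mathrm{rank}(A^{\sim}A)=\mathrm{rank}(A)$; (3) $\mathrm{rank}(A^{\sim}AA^{\sim})=\mathrm{rank}(A)$; (4) $A\mathcal{R}(A^{\sim})\oplus\mathcal{N}(A^{\sim})=\mathbb{C}^m$.
   Context: For a positive integer $k$, the Minkowski metric matrix of order $k$ is $G_k=\mathrm{diag}(1,-I_{k-1})$ (with $G_1=(1)$). For $A\in\mathbb{C}^{m\times n}$, the Minkowski adjoint is $A^{\sim}=G_nA^*G_m$, where $A^*$ is the conjugate transpose. The Minkowski inverse of $A$, denoted $A^{\mathfrak{m}}$, is a matrix $X\in\mathbb{C}^{n\times m}$ with $AXA=A$, $XAX=X$, $(AX)^{\sim}=AX$, $(XA)^{\sim}=XA$ (unique if it exists). $\mathcal{R}(\cdot)$, $\mathcal{N}(\cdot)$ denote range and null space, and $A\mathcal{R}(A^{\sim})=\{Av: v\in\mathcal{R}(A^{\sim})\}$. *)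

theory Defs
  imports "Jordan_Normal_Form.Schur_Decomposition" "Jordan_Normal_Form.DL_Rank"
    "Jordan_Normal_Form.Matrix_Kernel"
begin

definition minkowski_G :: "nat \<Rightarrow> complex mat" where
  "minkowski_G k = mat k k (\<lambda>(i,j). if i = j then (if i = 0 then 1 else -1) else 0)"

definition mink_adj :: "complex mat \<Rightarrow> complex mat" where
  "mink_adj A = minkowski_G (dim_col A) * mat_adjoint A * minkowski_G (dim_row A)"

definition is_minkowski_inverse :: "complex mat \<Rightarrow> complex mat \<Rightarrow> bool" where
  "is_minkowski_inverse A X \<longleftrightarrow>
     X \<in> carrier_mat (dim_col A) (dim_row A) \<and>
     A * X * A = A \<and> X * A * X = X \<and>
     mink_adj (A * X) = A * X \<and> mink_adj (X * A) = X * A"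

definition crank :: "complex mat \<Rightarrow> nat" where
  "crank A = vec_space.rank (dim_row A) A"

definition mat_range :: "complex mat \<Rightarrow> complex vec set" where
  "mat_range A = {A *\<^sub>v x | x. x \<in> carrier_vec (dim_col A)}"

definition mat_image :: "complex mat \<Rightarrow> complex vec set \<Rightarrow> complex vec set" where
  "mat_image A S = {A *\<^sub>v v | v. v \<in> S}"

definition direct_sum_full :: "nat \<Rightarrow> complex vec set \<Rightarrow> complex vec set \<Rightarrow> bool" where
  "direct_sum_full m U W \<longleftrightarrow>
     U \<subseteq> carrier_vec m \<and> W \<subseteq> carrier_vec m \<and>
     U \<inter> W = {0\<^sub>v m} \<and>
     {u + w | u w. u \<in> U \<and> w \<in> W} = carrier_vec m"

end

theory Submission
  imports Defs
begin



lemma rank_nullity_mat: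
  fixes M :: "'a::field mat"
  assumes M: "M \<in> carrier_mat nr nc"
  shows "vec_space.rank nr M + kernel_dim M = nc"
proof -
  interpret V: vec_space "TYPE('a)" nc .
  interpret W: vec_space "TYPE('a)" nr .
  interpret L: linear_map class_ring "module_vec TYPE('a) nc" "module_vec TYPE('a) nr" "\<lambda>v. M *\<^sub>v v"
    apply (intro_locales)
    unfolding mod_hom_axioms_def LinearCombinations.module_hom_def
    using M by (auto simp: module_vec_def mult_add_distrib_mat_vec mult_mat_vec)
  interpret K: kernel nr nc M using M by unfold_locales
  have rn: "vectorspace.dim class_ring (W.vs L.imT) + vectorspace.dim class_ring (V.vs L.kerT) = V.dim"
    by (rule L.rank_nullity) simp
  have im: "L.imT = W.span (set (cols M))"
    using W.col_space_eq[OF M] M unfolding L.im_def W.col_space_def by auto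
  have ker: "L.kerT = mat_kernel M"
    using M unfolding L.ker_def mat_kernel_def by (auto simp: module_vec_def)
  show ?thesis using rn unfolding im ker V.dim_is_n W.rank_def K.kernel_dim
    by simp
qed



context vec_space
begin

lemma li_sub_iff:
  assumes W: "VectorSpace.subspace class_ring W V" and S: "S \<subseteq> W"
  shows "module.lin_indpt class_ring (vs W) S = lin_indpt S"
  using span_li_not_depend(2)[OF S] W unfolding subspace_def by auto

lemma span_sub_eq:
  assumes W: "VectorSpace.subspace class_ring W V" and S: "S \<subseteq> W"
  shows "LinearCombinations.module.span class_ring (vs W) S = span S"
  using span_li_not_depend(1)[OF S] W unfolding subspace_def by auto

lemma subspace_fin_dim:
  assumes W: "VectorSpace.subspace class_ring W V"
  shows "vectorspace.fin_dim class_ring (vs W)"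
proof -
  interpret VW: vectorspace class_ring "vs W" using subspace_is_vs[OF W] .
  have "submodule class_ring W V" using W by (simp add: VectorSpace.subspace_def)
  from submodule.subset[OF this] have WC: "W \<subseteq> carrier V" .
  let ?P = "\<lambda>S. S \<subseteq> carrier (vs W) \<and> VW.lin_indpt S"
  have bnd: "finite A \<and> card A \<le> n" if "?P A" for A
  proof -
    have "lin_indpt A" "A \<subseteq> carrier V" using that li_sub_iff[OF W] WC by auto
    thus ?thesis using li_le_dim[OF fin_dim] dim_is_n by auto
  qed
  have P0: "?P {}" using VW.span_empty by (auto simp: VW.lin_dep_def)
  obtain A where A: "finite A" "maximal A ?P" using maximal_exists[of ?P, OF bnd P0] by blast
  have "VW.basis A" by (rule VW.max_li_is_basis[OF A(2)])
  thus ?thesis using A(1) unfolding VW.fin_dim_def VW.basis_def by auto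
qed

lemma subspace_dim_mono:
  assumes W1: "VectorSpace.subspace class_ring W1 V" and W2: "VectorSpace.subspace class_ring W2 V" and sub: "W1 \<subseteq> W2"
  shows "vectorspace.dim class_ring (vs W1) \<le> vectorspace.dim class_ring (vs W2)"
proof -
  interpret V2: vectorspace class_ring "vs W2" using subspace_is_vs[OF W2] .
  have "VectorSpace.subspace class_ring W1 (vs W2)" by (rule nested_subspaces[OF W2 W1 sub])
  from V2.subspace_dim[OF this subspace_fin_dim[OF W2]] subspace_fin_dim[OF W1]
  show ?thesis by simp
qed

lemma subspace_dim_eq:
  assumes W1: "VectorSpace.subspace class_ring W1 V" and W2: "VectorSpace.subspace class_ring W2 V" and sub: "W1 \<subseteq> W2"
    and d: "vectorspace.dim class_ring (vs W2) \<le> vectorspace.dim class_ring (vs W1)"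
  shows "W1 = W2"
proof -
  interpret V1: vectorspace class_ring "vs W1" using subspace_is_vs[OF W1] .
  interpret V2: vectorspace class_ring "vs W2" using subspace_is_vs[OF W2] .
  obtain b where b: "finite b" "V1.basis b" using V1.finite_basis_exists[OF subspace_fin_dim[OF W1]] by blast
  have bW1: "b \<subseteq> W1" using b unfolding V1.basis_def by auto
  have li: "lin_indpt b" using b li_sub_iff[OF W1 bW1] unfolding V1.basis_def by auto
  have sp1: "span b = W1" using b span_sub_eq[OF W1 bW1] unfolding V1.basis_def by auto
  have cb: "card b = V1.dim" using V1.dim_basis[OF b] by simp
  have "V2.basis b"
    apply (rule V2.dim_li_is_basis[OF subspace_fin_dim[OF W2] b(1)])
    using bW1 sub li li_sub_iff[OF W2] cb d by auto
  hence "span b = W2" using span_sub_eq[OF W2] bW1 sub unfolding V2.basis_def by auto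
  with sp1 show ?thesis by simp
qed

end



definition sg :: "nat \<Rightarrow> complex" where "sg k = (if k = 0 then 1 else -1)"

lemma sg_sq[simp]: "sg k * sg k = 1" by (simp add: sg_def)
lemma sg_sq2[simp]: "sg k * (sg k * x) = x" by (simp add: sg_def)
lemma cnj_sg[simp]: "cnj (sg k) = sg k" by (simp add: sg_def)

lemma adj_carrier[simp]: "A \<in> carrier_mat m n \<Longrightarrow> mat_adjoint A \<in> carrier_mat n m"
  unfolding mat_adjoint_def by auto

lemma adj_dims[simp]: "dim_row (mat_adjoint A) = dim_col A" "dim_col (mat_adjoint A) = dim_row A"
  unfolding mat_adjoint_def by auto

lemma adj_index[simp]: "i < dim_col A \<Longrightarrow> j < dim_row A \<Longrightarrow>
   mat_adjoint (A::complex mat) $$ (i,j) = cnj (A $$ (j,i))"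
  unfolding mat_adjoint_def by (simp add: mat_of_rows_index)

lemma mult_index: assumes "A \<in> carrier_mat a b" "B \<in> carrier_mat b c" "i < a" "j < c"
  shows "(A*B) $$ (i,j) = (\<Sum>l<b. A $$ (i,l) * B $$ (l,j))"
  proof -
  have d: "dim_row A = a" "dim_col A = b" "dim_row B = b" "dim_col B = c" using assms(1,2) by auto
  have "(A*B) $$ (i,j) = row A i \<bullet> col B j" using assms(3,4) d by simp
  also have "\<dots> = (\<Sum>l\<in>{0..<b}. row A i $ l * col B j $ l)" unfolding scalar_prod_def using d by simp
  also have "\<dots> = (\<Sum>l<b. A $$ (i, l) * B $$ (l, j))" unfolding lessThan_atLeast0
    by (rule sum.cong, insert assms(3,4) d, auto)
  finally show ?thesis .
qed

lemma G_carrier[simp]: "minkowski_G k \<in> carrier_mat k k"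
  unfolding minkowski_G_def by auto

lemma G_dims[simp]: "dim_row (minkowski_G k) = k" "dim_col (minkowski_G k) = k"
  unfolding minkowski_G_def by auto

lemma G_index: "i < k \<Longrightarrow> j < k \<Longrightarrow> minkowski_G k $$ (i,j) = (if i = j then sg i else 0)"
  unfolding minkowski_G_def sg_def by auto

lemma G_mult_left: assumes "X \<in> carrier_mat k c"
  shows "minkowski_G k * X = mat k c (\<lambda>(i,j). sg i * X $$ (i,j))"
proof (rule eq_matI)
  fix i j assume ij: "i < dim_row (mat k c (\<lambda>(i,j). sg i * X $$ (i,j)))" "j < dim_col (mat k c (\<lambda>(i,j). sg i * X $$ (i,j)))"
  hence i: "i < k" and j: "j < c" by auto
  have "(minkowski_G k * X) $$ (i,j) = (\<Sum>l<k. minkowski_G k $$ (i,l) * X $$ (l,j))"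
    by (rule mult_index[OF G_carrier assms i j])
  also have "\<dots> = (\<Sum>l<k. (if l = i then sg i * X $$ (i,j) else 0))"
    by (rule sum.cong, auto simp: G_index i)
  also have "\<dots> = sg i * X $$ (i,j)" using i by simp
  also have "\<dots> = mat k c (\<lambda>(i,j). sg i * X $$ (i,j)) $$ (i,j)" using i j by simp
  finally show "(minkowski_G k * X) $$ (i,j) = mat k c (\<lambda>(i,j). sg i * X $$ (i,j)) $$ (i,j)" .
qed (use assms in simp_all)

lemma G_mult_right: assumes "X \<in> carrier_mat r k"
  shows "X * minkowski_G k = mat r k (\<lambda>(i,j). X $$ (i,j) * sg j)"
proof (rule eq_matI)
  fix i j assume ij: "i < dim_row (mat r k (\<lambda>(i,j). X $$ (i,j) * sg j))" "j < dim_col (mat r k (\<lambda>(i,j). X $$ (i,j) * sg j))"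
  hence i: "i < r" and j: "j < k" by auto
  have "(X * minkowski_G k) $$ (i,j) = (\<Sum>l<k. X $$ (i,l) * minkowski_G k $$ (l,j))"
    by (rule mult_index[OF assms G_carrier i j])
  also have "\<dots> = (\<Sum>l<k. (if l = j then X $$ (i,j) * sg j else 0))"
    by (rule sum.cong, auto simp: G_index j)
  also have "\<dots> = X $$ (i,j) * sg j" using j by simp
  also have "\<dots> = mat r k (\<lambda>(i,j). X $$ (i,j) * sg j) $$ (i,j)" using i j by simp
  finally show "(X * minkowski_G k) $$ (i,j) = mat r k (\<lambda>(i,j). X $$ (i,j) * sg j) $$ (i,j)" .
qed (use assms in simp_all)

lemma mink_adj_mat: "mink_adj A = mat (dim_col A) (dim_row A) (\<lambda>(i,j). sg i * sg j * cnj (A $$ (j,i)))"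
proof -
  have c: "mat_adjoint A \<in> carrier_mat (dim_col A) (dim_row A)" by (rule carrier_matI) simp_all
  let ?M = "mat (dim_col A) (dim_row A) (\<lambda>(i,j). sg i * mat_adjoint A $$ (i,j))"
  have c2: "?M \<in> carrier_mat (dim_col A) (dim_row A)"
    by (rule mat_carrier)
  have e: "mink_adj A = mat (dim_col A) (dim_row A) (\<lambda>(i,j). ?M $$ (i,j) * sg j)" 
    unfolding mink_adj_def G_mult_left[OF c] G_mult_right[OF c2] ..
  show ?thesis unfolding e
  proof (rule cong_mat[OF refl refl])
    fix i j assume i: "i < dim_col A" and j: "j < dim_row A"
    have "?M $$ (i,j) = sg i * cnj (A $$ (j,i))" using i j by simp
    thus "(case (i, j) of (i, j) \<Rightarrow> ?M $$ (i, j) * sg j) =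
          (case (i, j) of (i, j) \<Rightarrow> sg i * sg j * cnj (A $$ (j, i)))"
      by (simp add: ac_simps)
  qed
qed

lemma mink_adj_carrier[simp]: "A \<in> carrier_mat m n \<Longrightarrow> mink_adj A \<in> carrier_mat n m"
  unfolding mink_adj_mat by auto

lemma mink_adj_dims[simp]: "dim_row (mink_adj A) = dim_col A" "dim_col (mink_adj A) = dim_row A"
  unfolding mink_adj_mat by auto

lemma mink_adj_index: "i < dim_col A \<Longrightarrow> j < dim_row A \<Longrightarrow> mink_adj A $$ (i,j) = sg i * sg j * cnj (A $$ (j,i))"
  unfolding mink_adj_mat by auto

lemma mink_adj_adj[simp]: "mink_adj (mink_adj A) = A"
proof (rule eq_matI)
  fix i j assume "i < dim_row A" "j < dim_col A"
  moreover have "sg i * sg j * (sg j * sg i * a) = a" for a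
    by (simp add: sg_def)
  ultimately show "mink_adj (mink_adj A) $$ (i, j) = A $$ (i, j)" by (simp add: mink_adj_index)
qed simp_all

lemma mink_adj_mult: assumes A: "A \<in> carrier_mat a b" and B: "B \<in> carrier_mat b c"
  shows "mink_adj (A * B) = mink_adj B * mink_adj A"
proof (rule eq_matI)
  fix i j assume "i < dim_row (mink_adj B * mink_adj A)" "j < dim_col (mink_adj B * mink_adj A)"
  hence i: "i < c" and j: "j < a" using A B by auto
  have "(mink_adj B * mink_adj A) $$ (i,j) = (\<Sum>l<b. mink_adj B $$ (i,l) * mink_adj A $$ (l,j))"
    by (rule mult_index[OF mink_adj_carrier[OF B] mink_adj_carrier[OF A] i j])
  also have "\<dots> = (\<Sum>l<b. sg i * sg j * cnj (A $$ (j,l) * B $$ (l,i)))"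
  proof (rule sum.cong[OF refl])
    fix l assume l: "l \<in> {..<b}"
    have e: "sg i * sg l * cnj (B $$ (l, i)) * (sg l * sg j * cnj (A $$ (j, l))) = 
        (sg l * sg l) * (sg i * sg j * (cnj (A $$ (j, l)) * cnj (B $$ (l, i))))" by (simp only: ac_simps)
    have "mink_adj B $$ (i,l) = sg i * sg l * cnj (B $$ (l, i))" using B i l by (intro mink_adj_index, auto)
    moreover have "mink_adj A $$ (l,j) = sg l * sg j * cnj (A $$ (j, l))" using A j l by (intro mink_adj_index, auto)
    ultimately show "mink_adj B $$ (i,l) * mink_adj A $$ (l,j) = sg i * sg j * cnj (A $$ (j,l) * B $$ (l,i))"
      unfolding e sg_sq by simp
  qed
  also have "\<dots> = sg i * sg j * cnj (\<Sum>l<b. A $$ (j,l) * B $$ (l,i))"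
    by (simp add: sum_distrib_left)
  also have "\<dots> = sg i * sg j * cnj ((A * B) $$ (j,i))"
    by (simp only: mult_index[OF A B j i])
  also have "\<dots> = mink_adj (A * B) $$ (i,j)"
    using A B i j by (subst mink_adj_index, auto)
  finally show "mink_adj (A * B) $$ (i,j) = (mink_adj B * mink_adj A) $$ (i,j)" ..
qed (insert A B, simp_all)




context vec_space
begin

lemma col_space_subspace: assumes "A \<in> carrier_mat n nc"
  shows "VectorSpace.subspace class_ring (col_space A) V"
  unfolding col_space_def using assms by (intro span_is_subspace) (auto simp: cols_def)

lemma rank_col_space: "rank A = vectorspace.dim class_ring (vs (col_space A))"
  unfolding rank_def col_space_def by simp

lemma col_space_mult_sub: assumes A: "A \<in> carrier_mat n k" and B: "B \<in> carrier_mat k nc"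
  shows "col_space (A * B) \<subseteq> col_space A"
proof
  fix y assume "y \<in> col_space (A * B)"
  then obtain x where x: "x \<in> carrier_vec nc" and y: "y = (A * B) *\<^sub>v x" and yc: "y \<in> carrier_vec n"
    unfolding col_space_eq[OF mult_carrier_mat[OF A B]] using A B by auto
  have "y = A *\<^sub>v (B *\<^sub>v x)" using y A B x by (simp add: assoc_mult_mat_vec)
  moreover have "B *\<^sub>v x \<in> carrier_vec k" using B x by simp
  ultimately show "y \<in> col_space A" unfolding col_space_eq[OF A] using A yc by auto
qed

lemma rank_mult_left_le: assumes A: "A \<in> carrier_mat n k" and B: "B \<in> carrier_mat k nc"
  shows "rank (A * B) \<le> rank A"
  unfolding rank_col_space
  by (rule subspace_dim_mono[OF col_space_subspace col_space_subspace col_space_mult_sub[OF A B]],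
      insert A B, auto)

lemma rank_mult_factor: assumes A: "A \<in> carrier_mat n k" and B: "B \<in> carrier_mat k nc"
  and r: "rank A \<le> rank (A * B)"
  shows "\<exists>P \<in> carrier_mat nc k. A = A * B * P"
proof -
  have AB: "A * B \<in> carrier_mat n nc" using A B by simp
  have eq: "col_space (A * B) = col_space A"
    by (rule subspace_dim_eq[OF col_space_subspace[OF AB] col_space_subspace[OF A] col_space_mult_sub[OF A B]])
      (use r in \<open>simp add: rank_col_space\<close>)
  have "\<forall>j. \<exists>x. j < k \<longrightarrow> x \<in> carrier_vec nc \<and> (A * B) *\<^sub>v x = col A j"
  proof (intro allI impI)
    fix j
    show "\<exists>x. j < k \<longrightarrow> x \<in> carrier_vec nc \<and> (A * B) *\<^sub>v x = col A j"
    proof (cases "j < k")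
      case True
      have sc: "set (cols A) \<subseteq> carrier_vec n" using A by (auto simp: cols_def)
      have "col A j \<in> set (cols A)" using A True by (auto simp: cols_def)
      hence "col A j \<in> col_space A" unfolding col_space_def
        using in_own_span[OF sc] by auto
      hence "col A j \<in> col_space (A * B)" using eq by simp
      then show ?thesis unfolding col_space_eq[OF AB] using AB B by auto
    qed auto
  qed
  then obtain x where x: "\<And>j. j < k \<Longrightarrow> x j \<in> carrier_vec nc \<and> (A * B) *\<^sub>v x j = col A j"
    by metis
  define P where "P = mat nc k (\<lambda>(i,j). x j $ i)"
  have P: "P \<in> carrier_mat nc k" unfolding P_def by simp
  have colP: "col P j = x j" if "j < k" for j
    using x[OF that] that unfolding P_def by (auto intro!: eq_vecI)
  have "A * B * P = A"
  proof (rule mat_col_eqI)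
    fix j assume "j < dim_col A"
    hence j: "j < k" using A by simp
    show "col (A * B * P) j = col A j"
      using col_mult2[OF AB P j] colP[OF j] x[OF j] by simp
  qed (use A B P in simp_all)
  hence "A = A * B * P" by (rule sym)
  thus ?thesis using P by (intro bexI[of _ P])
qed

end

lemma kernel_subspace: fixes M :: "'a::field mat" assumes M: "M \<in> carrier_mat nr nc"
  shows "VectorSpace.subspace class_ring (mat_kernel M) (module_vec TYPE('a) nc)"
proof -
  interpret V: vec_space "TYPE('a)" nc .
  show ?thesis
  proof (intro subspace.intro V.vectorspace_axioms submodule.intro V.module_axioms)
    show "mat_kernel M \<subseteq> carrier (module_vec TYPE('a) nc)"
      using mat_kernel_carrier[OF M] by simp
    fix v w assume "v \<in> mat_kernel M" "w \<in> mat_kernel M"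
    thus "v \<oplus>\<^bsub>module_vec TYPE('a) nc\<^esub> w \<in> mat_kernel M"
      using M by (auto simp: mat_kernel_def module_vec_def mult_add_distrib_mat_vec)
  next
    show "\<zero>\<^bsub>module_vec TYPE('a) nc\<^esub> \<in> mat_kernel M"
      using M by (auto simp: mat_kernel_def module_vec_def)
  next
    fix c :: 'a and v assume "c \<in> carrier (class_ring :: 'a ring)" "v \<in> mat_kernel M"
    thus "c \<odot>\<^bsub>module_vec TYPE('a) nc\<^esub> v \<in> mat_kernel M"
      using M by (auto simp: mat_kernel_def module_vec_def mult_mat_vec)
  qed
qed

lemma kernel_dim_alt: fixes M :: "'a::field mat" assumes M: "M \<in> carrier_mat nr nc"
  shows "kernel_dim M = vectorspace.dim class_ring ((module_vec TYPE('a) nc)\<lparr>carrier := mat_kernel M\<rparr>)"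
proof -
  interpret K: kernel nr nc M using M by unfold_locales
  show ?thesis using K.kernel_dim by simp
qed

lemma kernel_dim_mono: fixes M N :: "'a::field mat"
  assumes M: "M \<in> carrier_mat nr nc" and N: "N \<in> carrier_mat nr' nc"
  and sub: "mat_kernel M \<subseteq> mat_kernel N"
  shows "kernel_dim M \<le> kernel_dim N"
proof -
  interpret V: vec_space "TYPE('a)" nc .
  show ?thesis unfolding kernel_dim_alt[OF M] kernel_dim_alt[OF N]
    by (rule V.subspace_dim_mono[OF kernel_subspace[OF M] kernel_subspace[OF N] sub])
qed

lemma rank_mult_right_le: fixes A B :: "'a::field mat"
  assumes A: "A \<in> carrier_mat n k" and B: "B \<in> carrier_mat k nc"
  shows "vec_space.rank n (A * B) \<le> vec_space.rank k B"
proof -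
  have AB: "A * B \<in> carrier_mat n nc" using A B by simp
  have "kernel_dim B \<le> kernel_dim (A * B)"
    by (rule kernel_dim_mono[OF B AB mat_kernel_mult_subset[OF B A]])
  thus ?thesis using rank_nullity_mat[OF AB] rank_nullity_mat[OF B] by linarith
qed




lemma adj_adj[simp]: "mat_adjoint (mat_adjoint (A::complex mat)) = A"
  by (rule eq_matI) auto

lemma adj_kernel: assumes M: "(M::complex mat) \<in> carrier_mat m n"
  shows "mat_kernel (mat_adjoint M * M) = mat_kernel M"
proof
  have AM: "mat_adjoint M * M \<in> carrier_mat n n" using M by (simp add: mult_carrier_mat[OF adj_carrier[OF M] M])
  show "mat_kernel M \<subseteq> mat_kernel (mat_adjoint M * M)"
    by (rule mat_kernel_mult_subset[OF M adj_carrier[OF M]])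
  show "mat_kernel (mat_adjoint M * M) \<subseteq> mat_kernel M"
  proof
    fix v assume "v \<in> mat_kernel (mat_adjoint M * M)"
    from mat_kernelD[OF AM this] have v: "v \<in> carrier_vec n" and z: "(mat_adjoint M * M) *\<^sub>v v = 0\<^sub>v n" .
    define w where "w = M *\<^sub>v v"
    have w: "w \<in> carrier_vec m" unfolding w_def using M v by simp
    have z2: "mat_adjoint M *\<^sub>v w = 0\<^sub>v n" unfolding w_def using z M v
      by (simp add: assoc_mult_mat_vec[OF adj_carrier[OF M] M v])
    have wi: "w $ i = (\<Sum>j<n. M $$ (i,j) * v $ j)" if i: "i < m" for i
      unfolding w_def using M v i by (auto simp: scalar_prod_def lessThan_atLeast0 intro!: sum.cong)
    have ai: "(mat_adjoint M *\<^sub>v w) $ j = (\<Sum>i<m. cnj (M $$ (i,j)) * w $ i)" if j: "j < n" for j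
      using M w j by (auto simp: scalar_prod_def lessThan_atLeast0 intro!: sum.cong)
    have "(\<Sum>i<m. w $ i * cnj (w $ i)) = (\<Sum>i<m. w $ i * (\<Sum>j<n. cnj (M $$ (i,j)) * cnj (v $ j)))"
      by (rule sum.cong, auto simp: wi)
    also have "\<dots> = (\<Sum>i<m. \<Sum>j<n. cnj (v $ j) * (cnj (M $$ (i,j)) * w $ i))"
      by (simp add: sum_distrib_left ac_simps)
    also have "\<dots> = (\<Sum>j<n. \<Sum>i<m. cnj (v $ j) * (cnj (M $$ (i,j)) * w $ i))"
      by (rule sum.swap)
    also have "\<dots> = (\<Sum>j<n. cnj (v $ j) * (mat_adjoint M *\<^sub>v w) $ j)"
      by (rule sum.cong, auto simp: ai sum_distrib_left)
    also have "\<dots> = 0" using z2 by simp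
    finally have s0: "(\<Sum>i<m. w $ i * cnj (w $ i)) = 0" .
    have "w \<bullet>c w = 0" using w s0 by (simp add: scalar_prod_def lessThan_atLeast0)
    hence "w = 0\<^sub>v m" using conjugate_square_eq_0_vec[OF w] by simp
    thus "v \<in> mat_kernel M" unfolding w_def by (intro mat_kernelI[OF M v])
  qed
qed

lemma rank_le_adj: assumes M: "(M::complex mat) \<in> carrier_mat m n"
  shows "crank M \<le> crank (mat_adjoint M)"
proof -
  have A: "mat_adjoint M \<in> carrier_mat n m" using M by simp
  have AM: "mat_adjoint M * M \<in> carrier_mat n n" by (rule mult_carrier_mat[OF A M])
  have "crank M = vec_space.rank n (mat_adjoint M * M)"
    using rank_nullity_mat[OF M] rank_nullity_mat[OF AM] adj_kernel[OF M] M
    unfolding crank_def kernel_dim_def by simp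
  also have "\<dots> \<le> vec_space.rank n (mat_adjoint M)"
    by (rule vec_space.rank_mult_left_le[OF A M])
  finally show ?thesis unfolding crank_def using M by simp
qed

lemma rank_adj: assumes M: "(M::complex mat) \<in> carrier_mat m n"
  shows "crank (mat_adjoint M) = crank M"
  using rank_le_adj[OF M] rank_le_adj[OF adj_carrier[OF M]] by simp

lemma crank_mult_left_le: assumes A: "(A::complex mat) \<in> carrier_mat m k" and B: "B \<in> carrier_mat k n"
  shows "crank (A * B) \<le> crank A"
  using vec_space.rank_mult_left_le[OF A B] A unfolding crank_def by simp

lemma crank_mult_right_le: assumes A: "(A::complex mat) \<in> carrier_mat m k" and B: "B \<in> carrier_mat k n"
  shows "crank (A * B) \<le> crank B"
  using rank_mult_right_le[OF A B] A B unfolding crank_def by simp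

lemma crank_factor: assumes A: "(A::complex mat) \<in> carrier_mat m k" and B: "B \<in> carrier_mat k n"
  and r: "crank A \<le> crank (A * B)"
  shows "\<exists>P \<in> carrier_mat n k. A = A * B * P"
  using vec_space.rank_mult_factor[OF A B] r A unfolding crank_def by simp

lemma rank_mink_adj_le: assumes A: "(A::complex mat) \<in> carrier_mat m n"
  shows "crank (mink_adj A) \<le> crank A"
proof -
  have H: "mat_adjoint A \<in> carrier_mat n m" using A by simp
  have GH: "minkowski_G n * mat_adjoint A \<in> carrier_mat n m" by (rule mult_carrier_mat[OF G_carrier H])
  have "crank (mink_adj A) = crank (minkowski_G n * mat_adjoint A * minkowski_G m)"
    unfolding mink_adj_def using A by simp
  also have "\<dots> \<le> crank (minkowski_G n * mat_adjoint A)"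
    by (rule crank_mult_left_le[OF GH G_carrier])
  also have "\<dots> \<le> crank (mat_adjoint A)"
    by (rule crank_mult_right_le[OF G_carrier H])
  also have "\<dots> = crank A" by (rule rank_adj[OF A])
  finally show ?thesis .
qed

lemma rank_mink_adj: assumes A: "(A::complex mat) \<in> carrier_mat m n"
  shows "crank (mink_adj A) = crank A"
  using rank_mink_adj_le[OF A] rank_mink_adj_le[OF mink_adj_carrier[OF A]] by simp



lemma assoc': assumes "dim_col A = dim_row B" "dim_col B = dim_row C" shows "(A::'a::semiring_0 mat) * B * C = A * (B * C)"
proof -
  have "A \<in> carrier_mat (dim_row A) (dim_col A)" "B \<in> carrier_mat (dim_col A) (dim_col B)" "C \<in> carrier_mat (dim_col B) (dim_col C)"
    using assms by (auto intro: carrier_matI)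
  thus ?thesis by (rule assoc_mult_mat)
qed

lemma mink_adj_mult': assumes "dim_col A = dim_row B" shows "mink_adj (A * B) = mink_adj B * mink_adj A"
  by (rule mink_adj_mult[of A "dim_row A" "dim_col A" B "dim_col B"]) (use assms in \<open>auto intro: carrier_matI\<close>)

lemma left_cong: "A = T \<Longrightarrow> A * R = T * R" by (rule arg_cong)
lemma right_cong: "A = T \<Longrightarrow> R * A = R * T" by (rule arg_cong)

lemma construct:
  assumes A: "A \<in> carrier_mat m n" and Bdef: "B = mink_adj A"
  and r1: "crank A \<le> crank (A * B)" and r2: "crank B \<le> crank (B * A)"
  shows "\<exists>X. is_minkowski_inverse A X"
proof -
  have B: "B \<in> carrier_mat n m" using A Bdef by simp
  have BA: "mink_adj B = A" "mink_adj A = B" using Bdef by simp_all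
  obtain P' where P': "P' \<in> carrier_mat m n" and fP0: "A = A * B * P'" using crank_factor[OF A B r1] by blast
  obtain Y' where Y': "Y' \<in> carrier_mat n m" and fY0: "B = B * A * Y'" using crank_factor[OF B A r2] by blast
  note d = carrier_matD[OF A] carrier_matD[OF B] carrier_matD[OF P'] carrier_matD[OF Y']
  have fP: "A = A * (B * P')" using fP0 by (simp add: assoc' d)
  have fY: "B = B * (A * Y')" using fY0 by (simp add: assoc' d)
  define Y where "Y = P' * Y'"
  define Q where "Q = mink_adj P' * mink_adj Y'"
  have Y: "Y \<in> carrier_mat m m" unfolding Y_def by (rule mult_carrier_mat[OF P' Y'])
  have Q: "Q \<in> carrier_mat n n" unfolding Q_def by (rule mult_carrier_mat[OF mink_adj_carrier[OF P'] mink_adj_carrier[OF Y']])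
  note d = d carrier_matD[OF Y] carrier_matD[OF Q]
  have i: "B = B * (A * (B * Y))"
  proof -
    have "B * (A * (B * Y)) = B * (A * (B * P')) * Y'" unfolding Y_def by (simp add: assoc' d)
    also have "\<dots> = B * A * Y'" by (simp only: fP[symmetric])
    also have "\<dots> = B" using fY by (simp add: assoc' d)
    finally show ?thesis ..
  qed
  have a: "A = mink_adj Y' * (B * A)"
  proof -
    have "mink_adj B = mink_adj (B * (A * Y'))" using fY by (rule arg_cong)
    thus ?thesis by (simp add: mink_adj_mult' assoc' d BA)
  qed
  have b: "B = mink_adj P' * (A * B)"
  proof -
    have "mink_adj A = mink_adj (A * (B * P'))" using fP by (rule arg_cong)
    thus ?thesis by (simp add: mink_adj_mult' assoc' d BA)
  qed
  have ii: "B = Q * (B * (A * B))"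
  proof -
    have "B = mink_adj P' * (A * B)" by (rule b)
    also have "\<dots> = mink_adj P' * ((mink_adj Y' * (B * A)) * B)" by (rule right_cong[OF left_cong[OF a]])
    also have "\<dots> = Q * (B * (A * B))" unfolding Q_def by (simp add: assoc' d)
    finally show ?thesis .
  qed
  have iii: "A = mink_adj Y * (A * (B * A))"
  proof -
    have "mink_adj B = mink_adj (B * (A * (B * Y)))" using i by (rule arg_cong)
    thus ?thesis by (simp add: mink_adj_mult' assoc' d BA)
  qed
  have iv: "A = A * (B * (A * mink_adj Q))"
  proof -
    have "mink_adj B = mink_adj (Q * (B * (A * B)))" using ii by (rule arg_cong)
    thus ?thesis by (simp add: mink_adj_mult' assoc' d BA)
  qed
  define X where "X = B * Y"
  have X: "X \<in> carrier_mat n m" unfolding X_def by (rule mult_carrier_mat[OF B Y])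
  have X_eq: "B * Y = Q * B"
  proof -
    have "Q * B = Q * (B * (A * (B * Y)))" by (rule right_cong[OF i])
    also have "\<dots> = Q * (B * (A * B)) * Y" by (simp add: assoc' d)
    also have "\<dots> = B * Y" by (simp only: ii[symmetric])
    finally show ?thesis ..
  qed
  have e1: "A * X * A = A"
  proof -
    have "A * X * A = A * (B * (Y * A))" unfolding X_def by (simp add: assoc' d)
    also have "\<dots> = (mink_adj Y * (A * (B * A))) * (B * (Y * A))" by (rule left_cong[OF iii])
    also have "\<dots> = mink_adj Y * (A * ((B * (A * (B * Y))) * A))" by (simp add: assoc' d)
    also have "\<dots> = mink_adj Y * (A * (B * A))" by (simp only: i[symmetric])
    also have "\<dots> = A" by (simp only: iii[symmetric])
    finally show ?thesis .
  qed
  have e2: "X * A * X = X"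
  proof -
    have "X * A * X = (B * Y) * (A * (B * Y))" unfolding X_def by (simp add: assoc' d)
    also have "\<dots> = (Q * B) * (A * (B * Y))" by (rule left_cong[OF X_eq])
    also have "\<dots> = Q * (B * (A * (B * Y)))" by (simp add: assoc' d)
    also have "\<dots> = Q * B" by (simp only: i[symmetric])
    also have "\<dots> = X" unfolding X_def by (rule X_eq[symmetric])
    finally show ?thesis .
  qed
  have e3: "mink_adj (A * X) = A * X"
  proof -
    have "A * X = (mink_adj Y * (A * (B * A))) * (B * Y)" unfolding X_def by (rule left_cong[OF iii])
    also have "\<dots> = mink_adj Y * (A * (B * (A * (B * Y))))" by (simp add: assoc' d)
    also have "\<dots> = mink_adj Y * (A * B)" by (simp only: i[symmetric])
    finally have eq: "A * X = mink_adj Y * (A * B)" .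
    have "mink_adj (A * X) = mink_adj Y * (A * B)" unfolding X_def by (simp add: mink_adj_mult' assoc' d BA)
    with eq show ?thesis by simp
  qed
  have e4: "mink_adj (X * A) = X * A"
  proof -
    have "Q * (B * A) = Q * (B * (A * (B * (A * mink_adj Q))))" by (rule right_cong[OF right_cong[OF iv]])
    also have "\<dots> = Q * (B * (A * B)) * (A * mink_adj Q)" by (simp add: assoc' d)
    also have "\<dots> = B * (A * mink_adj Q)" by (simp only: ii[symmetric])
    finally have eq0: "Q * (B * A) = B * (A * mink_adj Q)" .
    have eq: "X * A = B * (A * mink_adj Q)" unfolding X_def X_eq eq0[symmetric] by (simp add: assoc' d)
    have "mink_adj (X * A) = mink_adj (B * (A * mink_adj Q))" using eq by (rule arg_cong)
    also have "\<dots> = B * (A * mink_adj Q)" by (simp add: mink_adj_mult' assoc' d BA eq0)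
    finally have m: "mink_adj (X * A) = B * (A * mink_adj Q)" .
    from m eq[symmetric] show ?thesis by (rule trans)
  qed
  have "is_minkowski_inverse A X"
    unfolding is_minkowski_inverse_def using X e1 e2 e3 e4 d by simp
  thus ?thesis by blast
qed



lemma crank_range_le: assumes A: "(A::complex mat) \<in> carrier_mat nr k1" and C: "C \<in> carrier_mat nr k2"
  and sub: "\<And>x. x \<in> carrier_vec k1 \<Longrightarrow> \<exists>y \<in> carrier_vec k2. A *\<^sub>v x = C *\<^sub>v y"
  shows "crank A \<le> crank C"
proof -
  interpret V: vec_space "TYPE(complex)" nr .
  have "V.col_space A \<subseteq> V.col_space C"
    unfolding V.col_space_eq[OF A] V.col_space_eq[OF C] using A C sub by fastforce
  hence "V.rank A \<le> V.rank C" unfolding V.rank_col_space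
    by (rule V.subspace_dim_mono[OF V.col_space_subspace[OF A] V.col_space_subspace[OF C]])
  thus ?thesis unfolding crank_def using A C by simp
qed

lemma inv_facts:
  assumes A: "A \<in> carrier_mat m n" and Bdef: "B = mink_adj A" and inv: "is_minkowski_inverse A X"
  shows "A = A * (B * mink_adj X)" "A = mink_adj X * (B * A)" "A * X = mink_adj X * B"
    "B = B * (mink_adj X * B)" "X \<in> carrier_mat n m"
proof -
  have B: "B \<in> carrier_mat n m" using A Bdef by simp
  have BA: "mink_adj B = A" "mink_adj A = B" using Bdef by simp_all
  have X: "X \<in> carrier_mat n m" and e1: "A * X * A = A" and e3: "mink_adj (A * X) = A * X"
    and e4: "mink_adj (X * A) = X * A"
    using inv unfolding is_minkowski_inverse_def using A by auto
  note d = carrier_matD[OF A] carrier_matD[OF B] carrier_matD[OF X]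
  show "X \<in> carrier_mat n m" by (rule X)
  have E: "A * X = mink_adj X * B"
    using e3 by (simp add: mink_adj_mult' d BA)
  show "A * X = mink_adj X * B" by (rule E)
  have F: "X * A = B * mink_adj X"
    using e4 by (simp add: mink_adj_mult' d BA)
  have "A = A * (X * A)" using e1 by (simp add: assoc' d)
  also have "\<dots> = A * (B * mink_adj X)" by (simp only: F)
  finally show "A = A * (B * mink_adj X)" .
  have "A = (A * X) * A" using e1 by simp
  also have "\<dots> = mink_adj X * (B * A)" by (simp only: E) (simp add: assoc' d)
  finally show "A = mink_adj X * (B * A)" .
  have "mink_adj A = mink_adj ((A * X) * A)" using e1 by simp
  also have "\<dots> = B * (mink_adj X * B)" by (simp add: mink_adj_mult' assoc' d BA E)
  finally show "B = B * (mink_adj X * B)" using BA by simp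
qed





lemma zero_mv: "M \<in> carrier_mat nr nc \<Longrightarrow> M *\<^sub>v 0\<^sub>v nc = 0\<^sub>v nr"
  by (rule eq_vecI) (auto simp: scalar_prod_def)

theorem theorem5p1:
  fixes A :: "complex mat" and m n :: nat
  assumes "A \<in> carrier_mat m n"
  shows "((\<exists>X. is_minkowski_inverse A X) \<longleftrightarrow>
            (crank (A * mink_adj A) = crank A \<and> crank (mink_adj A * A) = crank A))
       \<and> ((\<exists>X. is_minkowski_inverse A X) \<longleftrightarrow> crank (mink_adj A * A * mink_adj A) = crank A)
       \<and> ((\<exists>X. is_minkowski_inverse A X) \<longleftrightarrow>
            direct_sum_full m (mat_image A (mat_range (mink_adj A))) (mat_kernel (mink_adj A)))"
proof -
  note A = assms
  define B where "B = mink_adj A"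
  have B: "B \<in> carrier_mat n m" using A B_def by simp
  have AB: "A * B \<in> carrier_mat m m" by (rule mult_carrier_mat[OF A B])
  have BA: "B * A \<in> carrier_mat n n" by (rule mult_carrier_mat[OF B A])
  have BAB: "B * A * B \<in> carrier_mat n m" by (rule mult_carrier_mat[OF BA B])
  note d = carrier_matD[OF A] carrier_matD[OF B]
  have rB: "crank B = crank A" unfolding B_def by (rule rank_mink_adj[OF A])
  let ?I = "\<exists>X. is_minkowski_inverse A X"
  have I_r: "crank (A * B) = crank A \<and> crank (B * A) = crank A \<and> crank (B * A * B) = crank A" if ?I
  proof -
    from that obtain X where inv: "is_minkowski_inverse A X" by blast
    note f = inv_facts[OF A B_def inv]
    have Xt: "mink_adj X \<in> carrier_mat m n" using f(5) by simp
    have "A * B * mink_adj X = A * (B * mink_adj X)" using carrier_matD[OF Xt] by (simp add: assoc' d)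
    have f1: "A = A * B * mink_adj X" by (rule trans[OF f(1) sym], fact)
    have f3: "A = mink_adj X * ((B * A * B) * mink_adj X)"
    proof -
      have "A = mink_adj X * (B * A)" by (rule f(2))
      also have "\<dots> = mink_adj X * (B * (A * (B * mink_adj X)))" by (rule right_cong[OF right_cong[OF f(1)]])
      also have "\<dots> = mink_adj X * ((B * A * B) * mink_adj X)" using carrier_matD[OF Xt] by (simp add: assoc' d)
      finally show ?thesis .
    qed
    have "crank A \<le> crank (A * B)"
      using crank_mult_left_le[OF AB Xt] arg_cong[OF f1, of crank] by simp
    moreover have "crank (A * B) \<le> crank A" by (rule crank_mult_left_le[OF A B])
    moreover have "crank A \<le> crank (B * A)"
      using crank_mult_right_le[OF Xt BA] arg_cong[OF f(2), of crank] by simp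
    moreover have "crank (B * A) \<le> crank A" by (rule crank_mult_right_le[OF B A])
    moreover have "crank (B * A * B) \<le> crank (B * A)" by (rule crank_mult_left_le[OF BA B])
    moreover have "crank A \<le> crank (B * A * B)"
    proof -
      have "crank A \<le> crank ((B * A * B) * mink_adj X)"
        using crank_mult_right_le[OF Xt mult_carrier_mat[OF BAB Xt]] arg_cong[OF f3, of crank] by simp
      also have "\<dots> \<le> crank (B * A * B)" by (rule crank_mult_left_le[OF BAB Xt])
      finally show ?thesis .
    qed
    ultimately show ?thesis by linarith
  qed
  have r_I: "?I" if r1: "crank A \<le> crank (A * B)" and r2: "crank A \<le> crank (B * A)"
    by (rule construct[OF A B_def r1]) (use r2 rB in simp)
  have BAB_le: "crank (B * A * B) \<le> crank (A * B)" "crank (B * A * B) \<le> crank (B * A)"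
  proof -
    have "B * A * B = B * (A * B)" using d by (simp add: assoc')
    thus "crank (B * A * B) \<le> crank (A * B)" using crank_mult_right_le[OF B AB] by simp
    show "crank (B * A * B) \<le> crank (B * A)" by (rule crank_mult_left_le[OF BA B])
  qed
  have c1: "?I \<longleftrightarrow> (crank (A * B) = crank A \<and> crank (B * A) = crank A)"
  proof
    assume ?I thus "crank (A * B) = crank A \<and> crank (B * A) = crank A" using I_r by blast
  next
    assume "crank (A * B) = crank A \<and> crank (B * A) = crank A"
    thus ?I by (intro r_I) simp_all
  qed
  have c2: "?I \<longleftrightarrow> crank (B * A * B) = crank A"
  proof
    assume ?I thus "crank (B * A * B) = crank A" using I_r by blast
  next
    assume "crank (B * A * B) = crank A"
    thus ?I by (intro r_I) (use BAB_le in linarith)+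
  qed
  have img: "mat_image A (mat_range B) = {A *\<^sub>v (B *\<^sub>v x) | x. x \<in> carrier_vec m}"
    unfolding mat_image_def mat_range_def using d by auto
  have ds_I: "?I" if ds: "direct_sum_full m (mat_image A (mat_range B)) (mat_kernel B)"
  proof -
    have "crank B \<le> crank (B * A * B)"
    proof (rule crank_range_le[OF B BAB])
      fix x :: "complex vec" assume x: "x \<in> carrier_vec m"
      have "carrier_vec m \<subseteq> {u + w |u w. u \<in> mat_image A (mat_range B) \<and> w \<in> mat_kernel B}"
        using ds unfolding direct_sum_full_def by (simp only: order_refl)
      with x have "x \<in> {u + w |u w. u \<in> mat_image A (mat_range B) \<and> w \<in> mat_kernel B}" by (rule subsetD[rotated])
      then obtain u w where u: "u \<in> mat_image A (mat_range B)" and w: "w \<in> mat_kernel B" and xuw: "x = u + w"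
        by blast
      from u obtain y where y: "y \<in> carrier_vec m" and uy: "u = A *\<^sub>v (B *\<^sub>v y)" unfolding img by auto
      have wc: "w \<in> carrier_vec m" and Bw: "B *\<^sub>v w = 0\<^sub>v n" using mat_kernelD[OF B w] by auto
      have uc: "u \<in> carrier_vec m" using uy A B y by simp
      have "B *\<^sub>v x = B *\<^sub>v u + B *\<^sub>v w" unfolding xuw by (rule mult_add_distrib_mat_vec[OF B uc wc])
      also have "\<dots> = B *\<^sub>v u" using Bw B uc by simp
      also have "\<dots> = (B * A * B) *\<^sub>v y" unfolding uy
        using assoc_mult_mat_vec[OF BA B y] assoc_mult_mat_vec[OF B A mult_mat_vec_carrier[OF B y]] by simp
      finally show "\<exists>y \<in> carrier_vec m. B *\<^sub>v x = (B * A * B) *\<^sub>v y" using y by blast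
    qed
    thus ?thesis by (intro r_I) (use BAB_le rB in linarith)+
  qed
  have I_ds: "direct_sum_full m (mat_image A (mat_range B)) (mat_kernel B)" if ?I
  proof -
    from that obtain X where inv: "is_minkowski_inverse A X" by blast
    note f = inv_facts[OF A B_def inv]
    have X: "X \<in> carrier_mat n m" by (rule f(5))
    have Xt: "mink_adj X \<in> carrier_mat m n" using X by simp
    have AXA: "A * X * A = A" using inv unfolding is_minkowski_inverse_def by auto
    have AXc: "A * X \<in> carrier_mat m m" by (rule mult_carrier_mat[OF A X])
    show ?thesis unfolding direct_sum_full_def
    proof (intro conjI)
      show "mat_image A (mat_range B) \<subseteq> carrier_vec m" unfolding img using A B by auto
      show "mat_kernel B \<subseteq> carrier_vec m" by (rule mat_kernel_carrier[OF B])
      show "mat_image A (mat_range B) \<inter> mat_kernel B = {0\<^sub>v m}"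
      proof
        show "{0\<^sub>v m} \<subseteq> mat_image A (mat_range B) \<inter> mat_kernel B"
        proof -
          have "0\<^sub>v m = A *\<^sub>v (B *\<^sub>v 0\<^sub>v m)" using zero_mv[OF B] zero_mv[OF A] by simp
          hence "0\<^sub>v m \<in> mat_image A (mat_range B)" unfolding img by auto
          moreover have "0\<^sub>v m \<in> mat_kernel B" by (rule mat_kernelI[OF B], simp, rule zero_mv[OF B])
          ultimately show ?thesis by auto
        qed
        show "mat_image A (mat_range B) \<inter> mat_kernel B \<subseteq> {0\<^sub>v m}"
        proof
          fix v assume "v \<in> mat_image A (mat_range B) \<inter> mat_kernel B"
          then obtain x where x: "x \<in> carrier_vec m" and vx: "v = A *\<^sub>v (B *\<^sub>v x)" and vk: "v \<in> mat_kernel B"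
            unfolding img by auto
          have Bv: "B *\<^sub>v v = 0\<^sub>v n" using mat_kernelD[OF B vk] by simp
          have uc: "B *\<^sub>v x \<in> carrier_vec n" using B x by simp
          have "(A * X) *\<^sub>v v = ((A * X) * A) *\<^sub>v (B *\<^sub>v x)" unfolding vx
            by (rule assoc_mult_mat_vec[symmetric, OF AXc A uc])
          also have "\<dots> = v" unfolding AXA vx ..
          finally have e1: "(A * X) *\<^sub>v v = v" .
          have vc: "v \<in> carrier_vec m" using vx A uc by simp
          have "(A * X) *\<^sub>v v = mink_adj X *\<^sub>v (B *\<^sub>v v)" unfolding f(3)
            by (rule assoc_mult_mat_vec[OF Xt B vc])
          also have "\<dots> = 0\<^sub>v m" unfolding Bv by (rule zero_mv[OF Xt])
          finally show "v \<in> {0\<^sub>v m}" using e1 by simp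
        qed
      qed
      show "{u + w |u w. u \<in> mat_image A (mat_range B) \<and> w \<in> mat_kernel B} = carrier_vec m"
      proof
        show "{u + w |u w. u \<in> mat_image A (mat_range B) \<and> w \<in> mat_kernel B} \<subseteq> carrier_vec m"
          unfolding img using A B mat_kernel_carrier[OF B] by auto
        show "carrier_vec m \<subseteq> {u + w |u w. u \<in> mat_image A (mat_range B) \<and> w \<in> mat_kernel B}"
        proof
          fix v :: "complex vec" assume v: "v \<in> carrier_vec m"
          define u where "u = (A * X) *\<^sub>v v"
          define w where "w = v - u"
          have uc: "u \<in> carrier_vec m" unfolding u_def using AXc v by simp
          have XXv: "mink_adj X *\<^sub>v (X *\<^sub>v v) \<in> carrier_vec m" by (rule mult_mat_vec_carrier[OF Xt mult_mat_vec_carrier[OF X v]])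
          have "u = (A * (B * mink_adj X) * X) *\<^sub>v v" unfolding u_def by (subst left_cong[OF f(1)], rule refl)
          also have "\<dots> = A *\<^sub>v (B *\<^sub>v (mink_adj X *\<^sub>v (X *\<^sub>v v)))"
          proof -
            have BX: "B * mink_adj X \<in> carrier_mat n n" by (rule mult_carrier_mat[OF B Xt])
            have ABX: "A * (B * mink_adj X) \<in> carrier_mat m n" by (rule mult_carrier_mat[OF A BX])
            have Xv: "X *\<^sub>v v \<in> carrier_vec n" by (rule mult_mat_vec_carrier[OF X v])
            show ?thesis
              using assoc_mult_mat_vec[OF ABX X v] assoc_mult_mat_vec[OF A BX Xv] assoc_mult_mat_vec[OF B Xt Xv]
              by simp
          qed
          finally have "u \<in> mat_image A (mat_range B)" unfolding img using XXv by blast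
          moreover have "w \<in> mat_kernel B"
          proof (rule mat_kernelI[OF B])
            show "w \<in> carrier_vec m" unfolding w_def using v uc by simp
            have XB: "mink_adj X * B \<in> carrier_mat m m" by (rule mult_carrier_mat[OF Xt B])
            have "B *\<^sub>v u = (B * (mink_adj X * B)) *\<^sub>v v" unfolding u_def f(3)
              using assoc_mult_mat_vec[OF B XB v] by simp
            also have "\<dots> = B *\<^sub>v v" by (simp only: f(4)[symmetric])
            finally have Bu: "B *\<^sub>v u = B *\<^sub>v v" .
            have "B *\<^sub>v w = B *\<^sub>v v - B *\<^sub>v u" unfolding w_def by (rule mult_minus_distrib_mat_vec[OF B v uc])
            also have "\<dots> = 0\<^sub>v n" unfolding Bu using B v by simp
            finally show "B *\<^sub>v w = 0\<^sub>v n" .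
          qed
          moreover have "v = u + w" unfolding w_def using v uc by (auto intro!: eq_vecI)
          ultimately show "v \<in> {u + w |u w. u \<in> mat_image A (mat_range B) \<and> w \<in> mat_kernel B}" by blast
        qed
      qed
    qed
  qed
  have c3: "?I \<longleftrightarrow> direct_sum_full m (mat_image A (mat_range B)) (mat_kernel B)"
    using I_ds ds_I by blast
  show ?thesis using c1 c2 c3 unfolding B_def by blast
qed


end
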